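(* Let $(A,\mathit{Con},\mid\!\sim)$ be a cumulative nonmonotonic system and $(B,\mathit{Con}^*,\Delta)$ the normal default structure constructed from it as described in the context. Then every $P\in\mathit{Con}$ has a unique extension in $(B,\mathit{Con}^*,\Delta)$, namely $$\delta(P):=\widetilde{P}\cup\{[Q]\mid Q\in\mathit{Con},\ Q\subseteq\widetilde{P},\ \widetilde{Q}=\widetilde{P}\}.$$
   Context: An abstract nonmonotonic system is a triple $(A,\mathit{Con},\mid\!\sim)$ where $\mathit{Con}$ is a collection of finite subsets of $A$ and $\mid\!\sim\ \subseteq\mathit{Con}\times\mathit{Con}$, satisfying: (1) $X\subseteq Y\in\mathit{Con}\Rightarrow X\in\mathit{Con}$; (2) $a\in A\Rightarrow\{a\}\in\mathit{Con}$; (3) $X\mid\!\sim T\Rightarrow X\cup T\in\mathit{Con}$; (4) $Y\subseteq X\Rightarrow X\mid\!\sim Y$; (5) $X\mid\!\sim T$ and $T\cup X\mid\!\sim Y$ imply $X\mid\!\sim Y$; (6) $X\mid\!\sim Y$ and $X\mid\!\sim Z$ imply $X\mid\!\sim Y\cup Z$. It is cumulative if it also satisfies cautious monotony: $X\mid\!\sim\{a\}$ and $X\mid\!\sim\{b\}$ imply $X\cup\{a\}\mid\!\sim\{b\}$. For $X\in\mathit{Con}$, $\widetilde{X}:=\{t\in A\mid X\mid\!\sim\{t\}\}$. Construction: $B:=A\cup\{[X]\mid X\in\mathit{Con}\}$, where $[X]$ are new pairwise distinct tokens. $\Delta:=\{\frac{X:[X]}{[X]}\mid X\in\mathit{Con}\}\cup\{\frac{\{[X]\}:a}{a}\mid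 X\in\mathit{Con},\ a\in\widetilde{X}\setminus X\}$. For finite $W\subseteq B$, $W\in\mathit{Con}^*$ iff (i) $W\cap A\in\mathit{Con}$; (ii) for every pair of tokens $[X],[Y]\in W$, $\widetilde{X}=\widetilde{Y}$; (iii) if $[X]\in W$ then $X\mid\!\sim W\cap A$. An arbitrary subset of $B$ is consistent if all its finite subsets are in $\mathit{Con}^*$. Extensions in $(B,\mathit{Con}^*,\Delta)$: for consistent $x\subseteq B$ and $S\subseteq B$, $\phi(x,S,0)=x$, $\phi(x,S,i+1)=\phi(x,S,i)\cup\{a\mid\frac{X:a}{a}\in\Delta,\ X\subseteq\phi(x,S,i),\ \{a\}\cup S\text{ consistent}\}$, $\Phi(x,S)=\bigcup_i\phi(x,S,i)$; $y$ is an extension of $x$ if $\Phi(x,y)=y$. *)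

theory Defs
  imports Main
begin

text \<open>An abstract nonmonotonic system (A, Con, ent), ent X Y meaning X |~ Y.\<close>

definition nonmono_system :: "'a set \<Rightarrow> 'a set set \<Rightarrow> ('a set \<Rightarrow> 'a set \<Rightarrow> bool) \<Rightarrow> bool" where
  "nonmono_system A Con ent \<longleftrightarrow>
     (\<forall>X\<in>Con. finite X \<and> X \<subseteq> A) \<and>
     (\<forall>X Y. ent X Y \<longrightarrow> X \<in> Con \<and> Y \<in> Con) \<and>
     (\<forall>X Y. X \<subseteq> Y \<and> Y \<in> Con \<longrightarrow> X \<in> Con) \<and>
     (\<forall>a\<in>A. {a} \<in> Con) \<and>
     (\<forall>X T. ent X T \<longrightarrow> X \<union> T \<in> Con) \<and>
     (\<forall>X Y. X \<in> Con \<and> Y \<subseteq> X \<longrightarrow> ent X Y) \<and>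
     (\<forall>X T Y. ent X T \<and> ent (T \<union> X) Y \<longrightarrow> ent X Y) \<and>
     (\<forall>X Y Z. ent X Y \<and> ent X Z \<longrightarrow> ent X (Y \<union> Z))"

definition cumulative :: "'a set \<Rightarrow> 'a set set \<Rightarrow> ('a set \<Rightarrow> 'a set \<Rightarrow> bool) \<Rightarrow> bool" where
  "cumulative A Con ent \<longleftrightarrow> nonmono_system A Con ent \<and>
     (\<forall>X a b. ent X {a} \<and> ent X {b} \<longrightarrow> ent (X \<union> {a}) {b})"

definition tilde :: "'a set \<Rightarrow> ('a set \<Rightarrow> 'a set \<Rightarrow> bool) \<Rightarrow> 'a set \<Rightarrow> 'a set" where
  "tilde A ent X = {t \<in> A. ent X {t}}"

text \<open>Elements of B: old atoms and new tokens [X].\<close>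
datatype 'a tok = Atom 'a | Brk "'a set"

definition Bset :: "'a set \<Rightarrow> 'a set set \<Rightarrow> 'a tok set" where
  "Bset A Con = Atom ` A \<union> Brk ` Con"

definition atoms :: "'a tok set \<Rightarrow> 'a set" where
  "atoms W = {a. Atom a \<in> W}"

text \<open>Normal defaults X:c/c are represented by pairs (X, c).\<close>
definition Delta :: "'a set \<Rightarrow> 'a set set \<Rightarrow> ('a set \<Rightarrow> 'a set \<Rightarrow> bool) \<Rightarrow> ('a tok set \<times> 'a tok) set" where
  "Delta A Con ent =
     {(Atom ` X, Brk X) | X. X \<in> Con} \<union>
     {({Brk X}, Atom a) | X a. X \<in> Con \<and> a \<in> tilde A ent X - X}"

definition ConStar :: "'a set \<Rightarrow> 'a set set \<Rightarrow> ('a set \<Rightarrow> 'a set \<Rightarrow> bool) \<Rightarrow> 'a tok set \<Rightarrow> bool" where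
  "ConStar A Con ent W \<longleftrightarrow> finite W \<and> W \<subseteq> Bset A Con \<and>
     atoms W \<in> Con \<and>
     (\<forall>X Y. Brk X \<in> W \<and> Brk Y \<in> W \<longrightarrow> tilde A ent X = tilde A ent Y) \<and>
     (\<forall>X. Brk X \<in> W \<longrightarrow> ent X (atoms W))"

definition consistent :: "'a set \<Rightarrow> 'a set set \<Rightarrow> ('a set \<Rightarrow> 'a set \<Rightarrow> bool) \<Rightarrow> 'a tok set \<Rightarrow> bool" where
  "consistent A Con ent x \<longleftrightarrow> (\<forall>W. finite W \<and> W \<subseteq> x \<longrightarrow> ConStar A Con ent W)"

fun phi :: "'a set \<Rightarrow> 'a set set \<Rightarrow> ('a set \<Rightarrow> 'a set \<Rightarrow> bool) \<Rightarrow> 'a tok set \<Rightarrow> 'a tok set \<Rightarrow> nat \<Rightarrow> 'a tok set" where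
  "phi A Con ent x S 0 = x"
| "phi A Con ent x S (Suc i) = phi A Con ent x S i \<union>
     {c. \<exists>X. (X, c) \<in> Delta A Con ent \<and> X \<subseteq> phi A Con ent x S i \<and>
            consistent A Con ent (insert c S)}"

definition Phi :: "'a set \<Rightarrow> 'a set set \<Rightarrow> ('a set \<Rightarrow> 'a set \<Rightarrow> bool) \<Rightarrow> 'a tok set \<Rightarrow> 'a tok set \<Rightarrow> 'a tok set" where
  "Phi A Con ent x S = (\<Union>i. phi A Con ent x S i)"

definition is_extension :: "'a set \<Rightarrow> 'a set set \<Rightarrow> ('a set \<Rightarrow> 'a set \<Rightarrow> bool) \<Rightarrow> 'a tok set \<Rightarrow> 'a tok set \<Rightarrow> bool" where
  "is_extension A Con ent x y \<longleftrightarrow> consistent A Con ent x \<and> Phi A Con ent x y = y"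

definition delta :: "'a set \<Rightarrow> 'a set set \<Rightarrow> ('a set \<Rightarrow> 'a set \<Rightarrow> bool) \<Rightarrow> 'a set \<Rightarrow> 'a tok set" where
  "delta A Con ent P = Atom ` tilde A ent P \<union>
     {Brk Q | Q. Q \<in> Con \<and> Q \<subseteq> tilde A ent P \<and> tilde A ent Q = tilde A ent P}"

end

theory Submission
  imports Defs
begin

locale cumsys =
  fixes A :: "'a set" and Con :: "'a set set" and ent :: "'a set \<Rightarrow> 'a set \<Rightarrow> bool"
  assumes cum: "cumulative A Con ent"
begin

lemma ax: "nonmono_system A Con ent" and cm0: "\<forall>X a b. ent X {a} \<and> ent X {b} \<longrightarrow> ent (X \<union> {a}) {b}"
  using cum unfolding cumulative_def by blast+

lemma fin: "X \<in> Con \<Longrightarrow> finite X" using ax[unfolded nonmono_system_def, THEN conjunct1] by blast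
lemma subA: "X \<in> Con \<Longrightarrow> X \<subseteq> A" using ax[unfolded nonmono_system_def, THEN conjunct1] by blast
lemma entC: "ent X Y \<Longrightarrow> X \<in> Con \<and> Y \<in> Con" using ax[unfolded nonmono_system_def, THEN conjunct2, THEN conjunct1] by blast
lemma refl: "X \<in> Con \<Longrightarrow> Y \<subseteq> X \<Longrightarrow> ent X Y" using ax[unfolded nonmono_system_def, THEN conjunct2, THEN conjunct2, THEN conjunct2, THEN conjunct2, THEN conjunct2, THEN conjunct1] by blast
lemma cut: "ent X T \<Longrightarrow> ent (T \<union> X) Y \<Longrightarrow> ent X Y" using ax[unfolded nonmono_system_def, THEN conjunct2, THEN conjunct2, THEN conjunct2, THEN conjunct2, THEN conjunct2, THEN conjunct2, THEN conjunct1] by blast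
lemma un: "ent X Y \<Longrightarrow> ent X Z \<Longrightarrow> ent X (Y \<union> Z)" using ax[unfolded nonmono_system_def, THEN conjunct2, THEN conjunct2, THEN conjunct2, THEN conjunct2, THEN conjunct2, THEN conjunct2, THEN conjunct2] by blast
lemma cm: "ent X {a} \<Longrightarrow> ent X {b} \<Longrightarrow> ent (X \<union> {a}) {b}" using cm0 by blast
lemma ax3: "ent X T \<Longrightarrow> X \<union> T \<in> Con" using ax[unfolded nonmono_system_def, THEN conjunct2, THEN conjunct2, THEN conjunct2, THEN conjunct2, THEN conjunct1] by blast

lemma E: assumes "X \<in> Con" "finite T" "T \<subseteq> tilde A ent X" shows "ent X T"
  using assms(2,3)
proof (induction T rule: finite_induct)
  case empty then show ?case using refl[OF assms(1)] by simp
next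
  case (insert a T)
  then have "ent X {a}" by (simp add: tilde_def)
  with insert show ?case using un[of X "{a}" T] by simp
qed

lemma self: "X \<in> Con \<Longrightarrow> X \<subseteq> tilde A ent X"
  unfolding tilde_def using subA refl by blast

lemma M1: assumes "X \<in> Con" "finite T" "T \<subseteq> tilde A ent X"
  shows "\<forall>t\<in>tilde A ent X. ent (X \<union> T) {t}"
  using assms(2,3)
proof (induction T rule: finite_induct)
  case empty then show ?case by (simp add: tilde_def)
next
  case (insert a T)
  then have IH: "\<forall>t\<in>tilde A ent X. ent (X \<union> T) {t}" by simp
  have "a \<in> tilde A ent X" using insert by simp
  then have a: "ent (X \<union> T) {a}" using IH by blast
  show ?case
  proof
    fix t assume "t \<in> tilde A ent X"
    then have "ent (X \<union> T) {t}" using IH by blast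
    from cm[OF a this] show "ent (X \<union> insert a T) {t}"
      by (metis Un_insert_right sup_bot.right_neutral Un_insert_left Un_assoc)
  qed
qed

lemma M: assumes "X \<in> Con" "finite T" "T \<subseteq> tilde A ent X"
  shows "tilde A ent (X \<union> T) = tilde A ent X"
proof
  show "tilde A ent (X \<union> T) \<subseteq> tilde A ent X"
  proof
    fix t assume "t \<in> tilde A ent (X \<union> T)"
    then have "t \<in> A" "ent (T \<union> X) {t}" by (auto simp: tilde_def Un_commute)
    with cut[OF E[OF assms]] show "t \<in> tilde A ent X" by (simp add: tilde_def)
  qed
next
  show "tilde A ent X \<subseteq> tilde A ent (X \<union> T)"
    using M1[OF assms] by (auto simp: tilde_def)
qed

lemma T: assumes "X \<in> Con" "P \<in> Con" "X \<subseteq> tilde A ent P" "P \<subseteq> tilde A ent X"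
  shows "tilde A ent X = tilde A ent P"
proof -
  have "tilde A ent (X \<union> P) = tilde A ent X" using M[OF assms(1) fin[OF assms(2)] assms(4)] .
  moreover have "tilde A ent (P \<union> X) = tilde A ent P" using M[OF assms(2) fin[OF assms(1)] assms(3)] .
  ultimately show ?thesis by (simp add: Un_commute)
qed

lemma atoms_fin: "finite W \<Longrightarrow> finite (atoms W)"
  unfolding atoms_def using finite_vimageI[of W Atom] by (simp add: vimage_def inj_def)

lemma delta_cons: assumes "P \<in> Con" "S \<subseteq> delta A Con ent P"
  shows "consistent A Con ent S"
  unfolding consistent_def
proof (intro allI impI)
  fix W assume W: "finite W \<and> W \<subseteq> S"
  have aW: "atoms W \<subseteq> tilde A ent P" using W assms(2)
    by (auto simp: atoms_def delta_def)
  have fa: "finite (atoms W)" using W atoms_fin by blast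
  have eP: "ent P (atoms W)" using E[OF assms(1) fa aW] .
  have f1: "W \<subseteq> Bset A Con" using W assms(2)
    by (auto simp: delta_def Bset_def tilde_def)
  have f2: "atoms W \<in> Con" using entC[OF eP] by blast
  have f3: "\<forall>X Y. Brk X \<in> W \<and> Brk Y \<in> W \<longrightarrow> tilde A ent X = tilde A ent Y"
  proof (intro allI impI)
    fix X Y assume "Brk X \<in> W \<and> Brk Y \<in> W"
    then have "Brk X \<in> delta A Con ent P" "Brk Y \<in> delta A Con ent P" using W assms(2) by auto
    then show "tilde A ent X = tilde A ent Y" unfolding delta_def by auto
  qed
  have f4: "\<forall>X. Brk X \<in> W \<longrightarrow> ent X (atoms W)"
  proof (intro allI impI)
    fix X assume "Brk X \<in> W"
    then have "X \<in> Con" "tilde A ent X = tilde A ent P" using W assms(2) by (auto simp: delta_def)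
    then show "ent X (atoms W)" using E[OF _ fa] aW by simp
  qed
  have f0: "finite W" using W by blast
  show "ConStar A Con ent W" unfolding ConStar_def using f0 f1 f2 f3 f4 by (intro conjI)
qed

lemma U: assumes "P \<in> Con" "Atom ` P \<subseteq> S"
  shows "phi A Con ent (Atom ` P) S i \<subseteq> delta A Con ent P"
proof (induction i)
  case 0
  have "Atom ` P \<subseteq> Atom ` tilde A ent P" using self[OF assms(1)] by blast
  then show ?case unfolding delta_def by simp blast
next
  case (Suc i)
  have "c \<in> delta A Con ent P" if X: "(X, c) \<in> Delta A Con ent"
    "X \<subseteq> phi A Con ent (Atom ` P) S i" "consistent A Con ent (insert c S)" for X c
  proof -
    from X(1) consider (b) Y where "X = Atom ` Y" "c = Brk Y" "Y \<in> Con"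
      | (a) Y a where "X = {Brk Y}" "c = Atom a" "Y \<in> Con" "a \<in> tilde A ent Y - Y"
      unfolding Delta_def by blast
    then show ?thesis
    proof cases
      case b
      have Y1: "Y \<subseteq> tilde A ent P" using X(2) Suc b by (auto simp: delta_def)
      let ?W = "insert (Brk Y) (Atom ` P)"
      have "finite ?W" using fin[OF assms(1)] by simp
      moreover have "?W \<subseteq> insert c S" using assms(2) b by auto
      ultimately have "ConStar A Con ent ?W" using X(3)
        unfolding consistent_def by blast
      then have "ent Y (atoms ?W)" unfolding ConStar_def by blast
      moreover have "atoms ?W = P" by (auto simp: atoms_def)
      ultimately have "ent Y P" by simp
      have Y2: "P \<subseteq> tilde A ent Y"
      proof
        fix p assume p: "p \<in> P"
        have "P \<union> Y \<in> Con" using ax3[OF \<open>ent Y P\<close>] by (simp add: Un_commute)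
        then have "ent (P \<union> Y) {p}" using refl p by blast
        then have "ent Y {p}" using cut[OF \<open>ent Y P\<close>] by blast
        then show "p \<in> tilde A ent Y" using p subA[OF assms(1)] by (auto simp: tilde_def)
      qed
      have "tilde A ent Y = tilde A ent P" using T[OF b(3) assms(1) Y1 Y2] .
      then show ?thesis using b Y1 by (auto simp: delta_def)
    next
      case a
      then have "Brk Y \<in> delta A Con ent P" using X(2) Suc by auto
      then have "tilde A ent Y = tilde A ent P" by (auto simp: delta_def)
      then show ?thesis using a by (auto simp: delta_def)
    qed
  qed
  then show ?case using Suc by auto
qed

lemma L: assumes "P \<in> Con" "S \<subseteq> delta A Con ent P"
  shows "delta A Con ent P \<subseteq> phi A Con ent (Atom ` P) S 3"
proof -
  let ?p = "phi A Con ent (Atom ` P) S"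
  have cons: "consistent A Con ent (insert c S)" if "c \<in> delta A Con ent P" for c
    using delta_cons[OF assms(1)] assms(2) that by auto
  have sP: "P \<subseteq> tilde A ent P" using self[OF assms(1)] .
  have m: "?p i \<subseteq> ?p (Suc i)" for i by auto
  have b1: "Brk P \<in> ?p 1"
  proof -
    have "(Atom ` P, Brk P) \<in> Delta A Con ent" using assms(1) by (auto simp: Delta_def)
    moreover have "Brk P \<in> delta A Con ent P" using assms(1) sP by (auto simp: delta_def)
    ultimately show ?thesis using cons by (auto simp: numeral_eq_Suc)
  qed
  have a2: "Atom ` tilde A ent P \<subseteq> ?p 2"
  proof
    fix c assume "c \<in> Atom ` tilde A ent P"
    then obtain a where a: "c = Atom a" "a \<in> tilde A ent P" by blast
    show "c \<in> ?p 2"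
    proof (cases "a \<in> P")
      case True then show ?thesis using a by (auto simp: numeral_eq_Suc)
    next
      case False
      have "({Brk P}, Atom a) \<in> Delta A Con ent" using assms(1) a False by (auto simp: Delta_def)
      moreover have "Atom a \<in> delta A Con ent P" using a by (auto simp: delta_def)
      ultimately have "Atom a \<in> ?p (Suc 1)" using cons b1 by (simp only: phi.simps) blast
      then show ?thesis using a by (simp add: numeral_eq_Suc)
    qed
  qed
  show ?thesis
  proof
    fix c assume c: "c \<in> delta A Con ent P"
    show "c \<in> ?p 3"
    proof (cases "c \<in> Atom ` tilde A ent P")
      case True then show ?thesis using a2 m[of 2] by (auto simp: numeral_eq_Suc)
    next
      case False
      then obtain Q where Q: "c = Brk Q" "Q \<in> Con" "Q \<subseteq> tilde A ent P" using c by (auto simp: delta_def)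
      have "(Atom ` Q, Brk Q) \<in> Delta A Con ent" using Q by (auto simp: Delta_def)
      moreover have "Atom ` Q \<subseteq> ?p 2" using Q a2 by auto
      ultimately have "c \<in> ?p (Suc 2)" using cons c Q by (simp only: phi.simps) blast
      then show ?thesis by (simp add: numeral_eq_Suc)
    qed
  qed
qed

lemma main: assumes "P \<in> Con"
  shows "is_extension A Con ent (Atom ` P) y \<longleftrightarrow> y = delta A Con ent P"
proof -
  have up: "Phi A Con ent (Atom ` P) S \<subseteq> delta A Con ent P" if "Atom ` P \<subseteq> S" for S
    unfolding Phi_def using U[OF assms that] by (intro UN_least)
  have lo: "delta A Con ent P \<subseteq> Phi A Con ent (Atom ` P) S" if "S \<subseteq> delta A Con ent P" for S
  proof -
    have "phi A Con ent (Atom ` P) S 3 \<subseteq> Phi A Con ent (Atom ` P) S" unfolding Phi_def by blast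
    with L[OF assms that] show ?thesis by (rule subset_trans)
  qed
  have ph0: "Atom ` P \<subseteq> Phi A Con ent (Atom ` P) S" for S
  proof -
    have "phi A Con ent (Atom ` P) S 0 \<subseteq> Phi A Con ent (Atom ` P) S" unfolding Phi_def by blast
    then show ?thesis by simp
  qed
  have "Atom ` P \<subseteq> Atom ` tilde A ent P" using self[OF assms] by blast
  then have Pd: "Atom ` P \<subseteq> delta A Con ent P" unfolding delta_def by blast
  then have c: "consistent A Con ent (Atom ` P)" using delta_cons[OF assms] by blast
  show ?thesis
  proof
    assume e: "is_extension A Con ent (Atom ` P) y"
    then have y: "Phi A Con ent (Atom ` P) y = y" by (simp add: is_extension_def)
    have "Atom ` P \<subseteq> y" using ph0[of y] y by simp
    then have a: "y \<subseteq> delta A Con ent P" using up[of y] y by simp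
    then have "delta A Con ent P \<subseteq> y" using lo[of y] y by simp
    with a show "y = delta A Con ent P" by (rule subset_antisym)
  next
    assume y: "y = delta A Con ent P"
    have "Phi A Con ent (Atom ` P) y = y" using up[of y] lo[of y] y Pd by blast
    then show "is_extension A Con ent (Atom ` P) y" using c by (simp add: is_extension_def)
  qed
qed

end

theorem lemma6:
  fixes A :: "'a set" and Con :: "'a set set" and ent :: "'a set \<Rightarrow> 'a set \<Rightarrow> bool"
  assumes "cumulative A Con ent"
    and "P \<in> Con"
  shows "\<forall>y. is_extension A Con ent (Atom ` P) y \<longleftrightarrow> y = delta A Con ent P"
  using cumsys.main[OF cumsys.intro[OF assms(1)] assms(2)] by blast

end
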